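(* Let $(\gamma_n)$ be a sequence of positive reals satisfying conditions (C1)–(C7) below, with associated polynomials $p_n$ and operators $K^n_t$. Then for all $f,g\in C^\infty_{\mathbb{R}\to\mathbb{C}}$ and all $n\in\mathbb{N}$, \[ \frac{d}{dt}\left[\sum_{m=0}^n K^m_t[f(t)]\,K^m_t[g(t)]\right]=\gamma_n\bigl(K^{n+1}_t[f(t)]\,K^n_t[g(t)]+K^n_t[f(t)]\,K^{n+1}_t[g(t)]\bigr). \]
   Context: Given positive reals $\gamma_n$, set $\gamma_{-1}=1$, $p_{-1}=0$, $p_0=1$ and $\gamma_n p_{n+1}(\omega)=\omega p_n(\omega)-\gamma_{n-1}p_{n-1}(\omega)$ ($n\ge0$). Let $\Delta_n=\gamma_{n+1}-\gamma_n$, $\Delta^2_n=\Delta_{n+1}-\Delta_n$. Conditions: (C1) $\gamma_n\to\infty$; (C2) $\Delta_n\to0$; (C3) there exist $n_0,m_0$ with $\gamma_{n+m}>\gamma_n$ for all $n\ge n_0$, $m\ge m_0$; (C4) $\sum 1/\gamma_j=\infty$; (C5) some $\kappa>1$ has $\sum\gamma_j^{-\kappa}<\infty$; (C6) $\sum|\Delta_n|/\gamma_n^2<\infty$; (C7) $\sum|\Delta^2_n|/\gamma_n<\infty$. $C^\infty_{\mathbb{R}\to\mathbb{C}}$ is the set of functions $\mathbb{R}\to\mathbb{C}$ whose real and imaginary parts are infinitely differentiable. The operators are $K^n_t=(-i)^n p_n\!\left(i\frac{d}{dt}\right)$. *)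

theory Defs
  imports "HOL-Analysis.Analysis" "HOL-Computational_Algebra.Polynomial"
begin

text \<open>Polynomials p_n: p_0 = 1, gamma_0 p_1 = w p_0 (since p_(-1) = 0),
  gamma_(n+1) p_(n+2) = w p_(n+1) - gamma_n p_n.\<close>
fun opoly :: "(nat \<Rightarrow> real) \<Rightarrow> nat \<Rightarrow> real poly" where
  "opoly \<gamma> 0 = 1"
| "opoly \<gamma> (Suc 0) = smult (1 / \<gamma> 0) [:0, 1:]"
| "opoly \<gamma> (Suc (Suc n)) =
     smult (1 / \<gamma> (Suc n)) ([:0, 1:] * opoly \<gamma> (Suc n) - smult (\<gamma> n) (opoly \<gamma> n))"

fun nderiv :: "nat \<Rightarrow> (real \<Rightarrow> complex) \<Rightarrow> real \<Rightarrow> complex" where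
  "nderiv 0 f = f"
| "nderiv (Suc k) f = (\<lambda>t. vector_derivative (nderiv k f) (at t))"

definition smooth_RC :: "(real \<Rightarrow> complex) \<Rightarrow> bool" where
  "smooth_RC f \<longleftrightarrow>
     (\<forall>k t. (deriv ^^ k) (\<lambda>s. Re (f s)) differentiable (at t)) \<and>
     (\<forall>k t. (deriv ^^ k) (\<lambda>s. Im (f s)) differentiable (at t))"

text \<open>K^n_t = (-i)^n p_n(i d/dt), applied to f, evaluated at t.\<close>
definition Kop :: "(nat \<Rightarrow> real) \<Rightarrow> nat \<Rightarrow> (real \<Rightarrow> complex) \<Rightarrow> real \<Rightarrow> complex" where
  "Kop \<gamma> n f t = (-\<i>) ^ n *
     (\<Sum>k\<le>degree (opoly \<gamma> n). complex_of_real (coeff (opoly \<gamma> n) k) * \<i> ^ k * nderiv k f t)"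

end

theory Submission
  imports Defs
begin



lemma nderiv_repr:
  assumes f: "smooth_RC f"
  shows "nderiv k f = (\<lambda>s. of_real ((deriv^^k) (\<lambda>s. Re (f s)) s) + \<i> * of_real ((deriv^^k) (\<lambda>s. Im (f s)) s))"
proof (induction k)
  case 0
  show ?case by (simp add: fun_eq_iff complex_eq)
next
  case (Suc k)
  have dR: "((deriv^^k) (\<lambda>s. Re (f s)) has_real_derivative (deriv^^Suc k) (\<lambda>s. Re (f s)) t) (at t)" for t
    using f unfolding smooth_RC_def by (simp add: DERIV_deriv_iff_real_differentiable)
  have dI: "((deriv^^k) (\<lambda>s. Im (f s)) has_real_derivative (deriv^^Suc k) (\<lambda>s. Im (f s)) t) (at t)" for t
    using f unfolding smooth_RC_def by (simp add: DERIV_deriv_iff_real_differentiable)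
  have "((\<lambda>s. of_real ((deriv^^k) (\<lambda>s. Re (f s)) s) + \<i> * of_real ((deriv^^k) (\<lambda>s. Im (f s)) s))
     has_vector_derivative (of_real ((deriv^^Suc k) (\<lambda>s. Re (f s)) t) + \<i> * of_real ((deriv^^Suc k) (\<lambda>s. Im (f s)) t))) (at t)" for t
    by (intro has_vector_derivative_add has_vector_derivative_mult_right has_vector_derivative_of_real dR dI)
  then show ?case using Suc by (auto simp: vector_derivative_at)
qed

lemma nderiv_has:
  assumes f: "smooth_RC f"
  shows "(nderiv k f has_vector_derivative nderiv (Suc k) f t) (at t)"
proof -
  have dR: "((deriv^^k) (\<lambda>s. Re (f s)) has_real_derivative (deriv^^Suc k) (\<lambda>s. Re (f s)) t) (at t)" for t
    using f unfolding smooth_RC_def by (simp add: DERIV_deriv_iff_real_differentiable)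
  have dI: "((deriv^^k) (\<lambda>s. Im (f s)) has_real_derivative (deriv^^Suc k) (\<lambda>s. Im (f s)) t) (at t)" for t
    using f unfolding smooth_RC_def by (simp add: DERIV_deriv_iff_real_differentiable)
  have "((\<lambda>s. of_real ((deriv^^k) (\<lambda>s. Re (f s)) s) + \<i> * of_real ((deriv^^k) (\<lambda>s. Im (f s)) s))
     has_vector_derivative (of_real ((deriv^^Suc k) (\<lambda>s. Re (f s)) t) + \<i> * of_real ((deriv^^Suc k) (\<lambda>s. Im (f s)) t))) (at t)"
    by (intro has_vector_derivative_add has_vector_derivative_mult_right has_vector_derivative_of_real dR dI)
  then show ?thesis using nderiv_repr[OF f, of k] nderiv_repr[OF f, of "Suc k"] by simp
qed

definition Lp :: "real poly \<Rightarrow> (real \<Rightarrow> complex) \<Rightarrow> real \<Rightarrow> complex" where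
  "Lp p f t = (\<Sum>k\<le>degree p. complex_of_real (coeff p k) * \<i> ^ k * nderiv k f t)"

lemma Lp_bound:
  assumes "degree p \<le> N"
  shows "Lp p f t = (\<Sum>k\<le>N. complex_of_real (coeff p k) * \<i> ^ k * nderiv k f t)"
  unfolding Lp_def
  by (rule sum.mono_neutral_left) (use assms in \<open>auto simp: coeff_eq_0\<close>)

lemma Kop_Lp: "Kop \<gamma> n f t = (-\<i>) ^ n * Lp (opoly \<gamma> n) f t"
  by (simp add: Kop_def Lp_def)

lemma Lp_add: "Lp (p + q) f t = Lp p f t + Lp q f t"
proof -
  let ?N = "max (degree p) (degree q)"
  have "Lp (p + q) f t = (\<Sum>k\<le>?N. complex_of_real (coeff (p+q) k) * \<i> ^ k * nderiv k f t)"
    by (rule Lp_bound) (meson degree_add_le max.cobounded1 max.cobounded2)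
  also have "\<dots> = (\<Sum>k\<le>?N. complex_of_real (coeff p k) * \<i> ^ k * nderiv k f t)
     + (\<Sum>k\<le>?N. complex_of_real (coeff q k) * \<i> ^ k * nderiv k f t)"
    by (simp add: sum.distrib distrib_right)
  also have "\<dots> = Lp p f t + Lp q f t"
    by (simp add: Lp_bound[symmetric])
  finally show ?thesis .
qed

lemma Lp_smult: "Lp (smult c p) f t = complex_of_real c * Lp p f t"
proof -
  have "Lp (smult c p) f t = (\<Sum>k\<le>degree p. complex_of_real (coeff (smult c p) k) * \<i> ^ k * nderiv k f t)"
    by (rule Lp_bound) (rule degree_smult_le)
  also have "\<dots> = complex_of_real c * Lp p f t"
    by (simp add: Lp_def sum_distrib_left mult.assoc)
  finally show ?thesis .
qed

lemma Lp_diff: "Lp (p - q) f t = Lp p f t - Lp q f t"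
  using Lp_add[of p "smult (-1) q" f t] Lp_smult[of "-1" q f t] by simp

lemma Lp_pCons: "Lp (pCons 0 p) f t = \<i> * (\<Sum>k\<le>degree p. complex_of_real (coeff p k) * \<i> ^ k * nderiv (Suc k) f t)"
proof -
  have "Lp (pCons 0 p) f t = (\<Sum>k\<le>Suc (degree p). complex_of_real (coeff (pCons 0 p) k) * \<i> ^ k * nderiv k f t)"
    by (rule Lp_bound) (rule degree_pCons_le)
  also have "\<dots> = \<i> * (\<Sum>k\<le>degree p. complex_of_real (coeff p k) * \<i> ^ k * nderiv (Suc k) f t)"
    by (subst sum.atMost_Suc_shift) (simp add: sum_distrib_left mult_ac)
  finally show ?thesis .
qed

lemma Lp_deriv:
  assumes f: "smooth_RC f"
  shows "(Lp p f has_vector_derivative (-\<i>) * Lp (pCons 0 p) f t) (at t)"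
proof -
  have "((\<lambda>s. \<Sum>k\<le>degree p. complex_of_real (coeff p k) * \<i> ^ k * nderiv k f s) has_vector_derivative
     (\<Sum>k\<le>degree p. complex_of_real (coeff p k) * \<i> ^ k * nderiv (Suc k) f t)) (at t)"
    by (intro has_vector_derivative_sum has_vector_derivative_mult_right nderiv_has f)
  moreover have "Lp p f = (\<lambda>s. \<Sum>k\<le>degree p. complex_of_real (coeff p k) * \<i> ^ k * nderiv k f s)"
    by (simp add: fun_eq_iff Lp_def)
  ultimately show ?thesis by (simp add: Lp_pCons)
qed

lemma X_mult: "[:0, 1:] * (p :: real poly) = pCons 0 p"
  by (simp add: mult_pCons_left poly_eq_iff)

lemma Kop_deriv:
  assumes pos: "\<And>n. \<gamma> n > 0" and f: "smooth_RC f"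
  shows "(Kop \<gamma> m f has_vector_derivative
     (complex_of_real (\<gamma> m) * Kop \<gamma> (Suc m) f t
       - (if m = 0 then 0 else complex_of_real (\<gamma> (m - 1)) * Kop \<gamma> (m - 1) f t))) (at t)"
proof (cases m)
  case 0
  have e: "Kop \<gamma> 0 f = Lp 1 f" by (simp add: fun_eq_iff Kop_Lp)
  have "(Lp 1 f has_vector_derivative (-\<i>) * Lp (pCons 0 1) f t) (at t)" by (rule Lp_deriv[OF f])
  moreover have "complex_of_real (\<gamma> 0) * Kop \<gamma> (Suc 0) f t = (-\<i>) * Lp (pCons 0 1) f t"
    using pos[of 0] unfolding Kop_Lp opoly.simps Lp_smult X_mult[of 1, symmetric] by simp
  ultimately show ?thesis using 0 e by simp
next
  case (Suc n)
  have e: "Kop \<gamma> (Suc n) f = (\<lambda>s. (-\<i>) ^ Suc n * Lp (opoly \<gamma> (Suc n)) f s)" by (simp add: fun_eq_iff Kop_Lp)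
  have "((\<lambda>s. (-\<i>) ^ Suc n * Lp (opoly \<gamma> (Suc n)) f s) has_vector_derivative
      (-\<i>) ^ Suc n * ((-\<i>) * Lp (pCons 0 (opoly \<gamma> (Suc n))) f t)) (at t)"
    by (intro has_vector_derivative_mult_right Lp_deriv[OF f])
  moreover have "complex_of_real (\<gamma> (Suc n)) * Kop \<gamma> (Suc (Suc n)) f t
      - complex_of_real (\<gamma> n) * Kop \<gamma> n f t
      = (-\<i>) ^ Suc n * ((-\<i>) * Lp (pCons 0 (opoly \<gamma> (Suc n))) f t)"
    using pos[of "Suc n"] by (simp add: Kop_Lp Lp_smult Lp_diff X_mult algebra_simps)
  ultimately show ?thesis using Suc e by simp
qed

lemma main_deriv:
  assumes pos: "\<And>n. \<gamma> n > 0" and f: "smooth_RC f" and g: "smooth_RC g"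
  shows "((\<lambda>s. \<Sum>m\<le>n. Kop \<gamma> m f s * Kop \<gamma> m g s) has_vector_derivative
           complex_of_real (\<gamma> n) *
             (Kop \<gamma> (Suc n) f t * Kop \<gamma> n g t + Kop \<gamma> n f t * Kop \<gamma> (Suc n) g t)) (at t)"
proof (induction n)
  case 0
  have "((\<lambda>s. Kop \<gamma> 0 f s * Kop \<gamma> 0 g s) has_vector_derivative
     Kop \<gamma> 0 f t * (complex_of_real (\<gamma> 0) * Kop \<gamma> (Suc 0) g t - (if (0::nat) = 0 then 0 else complex_of_real (\<gamma> (0 - 1)) * Kop \<gamma> (0 - 1) g t))
     + (complex_of_real (\<gamma> 0) * Kop \<gamma> (Suc 0) f t - (if (0::nat) = 0 then 0 else complex_of_real (\<gamma> (0 - 1)) * Kop \<gamma> (0 - 1) f t)) * Kop \<gamma> 0 g t) (at t)"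
    by (intro has_vector_derivative_mult Kop_deriv pos f g)
  then show ?case by (simp add: algebra_simps)
next
  case (Suc n)
  have "((\<lambda>s. Kop \<gamma> (Suc n) f s * Kop \<gamma> (Suc n) g s) has_vector_derivative
     Kop \<gamma> (Suc n) f t * (complex_of_real (\<gamma> (Suc n)) * Kop \<gamma> (Suc (Suc n)) g t - (if Suc n = 0 then 0 else complex_of_real (\<gamma> (Suc n - 1)) * Kop \<gamma> (Suc n - 1) g t))
     + (complex_of_real (\<gamma> (Suc n)) * Kop \<gamma> (Suc (Suc n)) f t - (if Suc n = 0 then 0 else complex_of_real (\<gamma> (Suc n - 1)) * Kop \<gamma> (Suc n - 1) f t)) * Kop \<gamma> (Suc n) g t) (at t)"
    by (intro has_vector_derivative_mult Kop_deriv pos f g)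
  from has_vector_derivative_add[OF Suc.IH this]
  show ?case by (simp add: algebra_simps)
qed


theorem lemma28:
  fixes \<gamma> :: "nat \<Rightarrow> real"
    and f g :: "real \<Rightarrow> complex"
    and n :: nat and t :: real
  assumes pos: "\<And>n. \<gamma> n > 0"
    and C1: "filterlim \<gamma> at_top sequentially"
    and C2: "(\<lambda>n. \<gamma> (Suc n) - \<gamma> n) \<longlonglongrightarrow> 0"
    and C3: "\<exists>n0 m0. \<forall>n\<ge>n0. \<forall>m\<ge>m0. \<gamma> (n + m) > \<gamma> n"
    and C4: "\<not> summable (\<lambda>j. 1 / \<gamma> j)"
    and C5: "\<exists>\<kappa>>1. summable (\<lambda>j. \<gamma> j powr (-\<kappa>))"
    and C6: "summable (\<lambda>n. \<bar>\<gamma> (Suc n) - \<gamma> n\<bar> / (\<gamma> n)\<^sup>2)"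
    and C7: "summable (\<lambda>n. \<bar>(\<gamma> (Suc (Suc n)) - \<gamma> (Suc n)) - (\<gamma> (Suc n) - \<gamma> n)\<bar> / \<gamma> n)"
    and f: "smooth_RC f" and g: "smooth_RC g"
  shows "((\<lambda>s. \<Sum>m\<le>n. Kop \<gamma> m f s * Kop \<gamma> m g s) has_vector_derivative
           complex_of_real (\<gamma> n) *
             (Kop \<gamma> (Suc n) f t * Kop \<gamma> n g t + Kop \<gamma> n f t * Kop \<gamma> (Suc n) g t)) (at t)"
  by (rule main_deriv[OF pos f g])

end
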